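(* Let $(X,\mathbb{A},d)$ be a complete $C^*$-algebra valued metric space, where $\mathbb{A}$ is a unital $C^*$-algebra, and let $T:X\to X$ be a $C^*$-algebra valued Ćirić-type2 contractive mapping, i.e. for every $x,y\in X$ there is $q(x,y)\in\acute{\mathbb{A}}_+$ with $0\le\|q(x,y)\|<1$, and there is a mapping $\delta:X\times X\to\mathbb{A}_+$, such that $$d(T^n x,T^n y)\preceq q(x,y)^n\,\delta(x,y)\quad\text{for all }x,y\in X,\ n\in\mathbb{N}.$$ Then $T$ is orbitally continuous on $X$ if and only if $T$ has a unique fixed point in $X$.
   Context: $\mathbb{A}$ denotes a unital $C^*$-algebra with unit $I$ and zero $\theta$. An element $a\in\mathbb{A}$ is positive, written $a\succeq\theta$, if $a^*=a$ and its spectrum is contained in $[0,\infty)$; $\mathbb{A}_+$ is the set of positive elements, and $a\succeq b$ means $a-b\succeq\theta$. $\acute{\mathbb{A}}_+$ denotes the set of positive elements of $\mathbb{A}$ that commute with every element of $\mathbb{A}$. A $C^*$-algebra valued metric space $(X,\mathbb{A},d)$ is a nonempty set $X$ with $d:X\times X\to\mathbb{A}$ such that for all $x,y,z\in X$: $d(x,y)\succeq\theta$, with $d(x,y)=\theta$ iff $x=y$; $d(x,y)=d(y,x)$; $d(x,y)\preceq d(x,z)+d(z,y)$. A sequence $\{x_n\}$ converges to $x$ if $\|d(x_n,x)\|\to0$, and is Cauchy if $\|d(x_n,x_m)\|\to0$ as $n,m\to\infty$; the space is complete if every Cauchy sequence converges to a point of $X$. A self-map $T$ of $X$ is orbitally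 continuous at $u\in X$ if for every $x\in X$ and every increasing sequence of positive integers $\{n_i\}$, $\|d(T^{n_i}x,u)\|\to0$ implies $\|d(T^{n_i+1}x,Tu)\|\to0$ as $i\to\infty$; $T$ is orbitally continuous on $X$ if it is orbitally continuous at every $u\in X$. *)

theory Defs
  imports "HOL-Analysis.Analysis"
begin

class cstar_algebra = real_normed_algebra_1 + banach +
  fixes scaleC :: "complex \<Rightarrow> 'a \<Rightarrow> 'a"
    and cstar :: "'a \<Rightarrow> 'a"
  assumes scaleC_add_right: "scaleC c (a + b) = scaleC c a + scaleC c b"
    and scaleC_add_left: "scaleC (c + e) a = scaleC c a + scaleC e a"
    and scaleC_scaleC: "scaleC c (scaleC e a) = scaleC (c * e) a"
    and scaleC_one: "scaleC 1 a = a"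
    and scaleR_scaleC: "scaleR r a = scaleC (complex_of_real r) a"
    and norm_scaleC: "norm (scaleC c a) = cmod c * norm a"
    and mult_scaleC_left: "scaleC c a * b = scaleC c (a * b)"
    and mult_scaleC_right: "a * scaleC c b = scaleC c (a * b)"
    and cstar_cstar: "cstar (cstar a) = a"
    and cstar_add: "cstar (a + b) = cstar a + cstar b"
    and cstar_mult: "cstar (a * b) = cstar b * cstar a"
    and cstar_scaleC: "cstar (scaleC c a) = scaleC (cnj c) (cstar a)"
    and cstar_identity: "norm (cstar a * a) = norm a * norm a"

definition spectrum :: "'a::cstar_algebra \<Rightarrow> complex set" where
  "spectrum a = {z. \<not> (\<exists>b. b * (a - scaleC z 1) = 1 \<and> (a - scaleC z 1) * b = 1)}"

definition positive :: "'a::cstar_algebra \<Rightarrow> bool" where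
  "positive a \<longleftrightarrow> cstar a = a \<and> spectrum a \<subseteq> {z. Im z = 0 \<and> 0 \<le> Re z}"

definition cleq :: "'a::cstar_algebra \<Rightarrow> 'a \<Rightarrow> bool" where
  "cleq a b \<longleftrightarrow> positive (b - a)"

definition central_positive :: "'a::cstar_algebra set" where
  "central_positive = {a. positive a \<and> (\<forall>b. a * b = b * a)}"

definition cstar_metric :: "('x \<Rightarrow> 'x \<Rightarrow> 'a::cstar_algebra) \<Rightarrow> bool" where
  "cstar_metric d \<longleftrightarrow> (\<forall>x y z. positive (d x y) \<and> (d x y = 0 \<longleftrightarrow> x = y)
      \<and> d x y = d y x \<and> cleq (d x y) (d x z + d z y))"

definition cconverges :: "('x \<Rightarrow> 'x \<Rightarrow> 'a::cstar_algebra) \<Rightarrow> (nat \<Rightarrow> 'x) \<Rightarrow> 'x \<Rightarrow> bool" where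
  "cconverges d s x \<longleftrightarrow> (\<lambda>n. norm (d (s n) x)) \<longlonglongrightarrow> 0"

definition ccauchy :: "('x \<Rightarrow> 'x \<Rightarrow> 'a::cstar_algebra) \<Rightarrow> (nat \<Rightarrow> 'x) \<Rightarrow> bool" where
  "ccauchy d s \<longleftrightarrow> (\<forall>e>0. \<exists>N. \<forall>m\<ge>N. \<forall>n\<ge>N. norm (d (s n) (s m)) < e)"

definition ccomplete :: "('x \<Rightarrow> 'x \<Rightarrow> 'a::cstar_algebra) \<Rightarrow> bool" where
  "ccomplete d \<longleftrightarrow> (\<forall>s. ccauchy d s \<longrightarrow> (\<exists>x. cconverges d s x))"

definition orbitally_continuous_at ::
  "('x \<Rightarrow> 'x \<Rightarrow> 'a::cstar_algebra) \<Rightarrow> ('x \<Rightarrow> 'x) \<Rightarrow> 'x \<Rightarrow> bool" where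
  "orbitally_continuous_at d T u \<longleftrightarrow>
     (\<forall>x (ni::nat \<Rightarrow> nat). strict_mono ni \<longrightarrow>
        (\<lambda>i. norm (d ((T ^^ ni i) x) u)) \<longlonglongrightarrow> 0 \<longrightarrow>
        (\<lambda>i. norm (d ((T ^^ (ni i + 1)) x) (T u))) \<longlonglongrightarrow> 0)"

definition orbitally_continuous ::
  "('x \<Rightarrow> 'x \<Rightarrow> 'a::cstar_algebra) \<Rightarrow> ('x \<Rightarrow> 'x) \<Rightarrow> bool" where
  "orbitally_continuous d T \<longleftrightarrow> (\<forall>u. orbitally_continuous_at d T u)"

definition ciric_type2 :: "('x \<Rightarrow> 'x \<Rightarrow> 'a::cstar_algebra) \<Rightarrow> ('x \<Rightarrow> 'x) \<Rightarrow> bool" where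
  "ciric_type2 d T \<longleftrightarrow>
     (\<exists>(q::'x \<Rightarrow> 'x \<Rightarrow> 'a) (\<delta>::'x \<Rightarrow> 'x \<Rightarrow> 'a).
        (\<forall>x y. q x y \<in> central_positive \<and> norm (q x y) < 1) \<and>
        (\<forall>x y. positive (\<delta> x y)) \<and>
        (\<forall>x y n. n \<ge> 1 \<longrightarrow> cleq (d ((T ^^ n) x) ((T ^^ n) y)) (q x y ^ n * \<delta> x y)))"

end

theory Submission
  imports Defs
begin


context cstar_algebra begin

lemma sC_zero_left[simp]: "scaleC 0 a = 0"
  using scaleC_add_left[of 0 0 a] by simp

lemma sC_zero_right[simp]: "scaleC c 0 = 0"
  using scaleC_add_right[of c 0 0] by simp

lemma sC_of_real: "scaleC (complex_of_real r) a = r *\<^sub>R a"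
  by (simp add: scaleR_scaleC)

lemma sC_minus_left: "scaleC (- c) a = - scaleC c a"
proof -
  have "scaleC c a + scaleC (-c) a = 0" using scaleC_add_left[of c "-c" a, symmetric] by simp
  from minus_unique[OF this] show ?thesis by simp
qed

lemma sC_minus_right: "scaleC c (- a) = - scaleC c a"
proof -
  have "scaleC c a + scaleC c (-a) = 0" using scaleC_add_right[of c a "-a", symmetric] by simp
  from minus_unique[OF this] show ?thesis by simp
qed

lemma sC_diff_left: "scaleC (c - e) a = scaleC c a - scaleC e a"
  using scaleC_add_left[of c "-e" a] by (simp add: sC_minus_left)

lemma sC_diff_right: "scaleC c (a - b) = scaleC c a - scaleC c b"
  using scaleC_add_right[of c a "-b"] by (simp add: sC_minus_right)

lemma sC_sum_right: "scaleC c (sum f A) = sum (\<lambda>i. scaleC c (f i)) A"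
  by (induct A rule: infinite_finite_induct) (auto simp: scaleC_add_right)

lemma sC_sum_left: "scaleC (sum f A) a = sum (\<lambda>i. scaleC (f i) a) A"
  by (induct A rule: infinite_finite_induct) (auto simp: scaleC_add_left)

lemma sC_one_mult: "scaleC c 1 * a = scaleC c a"
  by (simp add: mult_scaleC_left)

lemma mult_sC_one: "a * scaleC c 1 = scaleC c a"
  by (simp add: mult_scaleC_right)

lemma sC_power: "(scaleC c a) ^ n = scaleC (c ^ n) (a ^ n)"
  by (induct n) (auto simp: scaleC_one mult_scaleC_left mult_scaleC_right scaleC_scaleC mult.commute)

lemma cstar_one: "cstar 1 = 1"
proof -
  have "cstar 1 = cstar 1 * cstar (cstar 1)" using cstar_cstar[of 1] by simp
  also have "\<dots> = cstar (cstar 1 * 1)" by (rule cstar_mult[symmetric])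
  also have "\<dots> = 1" by (simp add: cstar_cstar)
  finally show ?thesis .
qed

lemma cstar_zero: "cstar 0 = 0"
  using cstar_add[of 0 0] by simp

lemma cstar_minus: "cstar (- a) = - cstar a"
proof -
  have "cstar a + cstar (-a) = 0" using cstar_add[of a "-a", symmetric] by (simp add: cstar_zero)
  from minus_unique[OF this] show ?thesis by simp
qed

lemma cstar_diff: "cstar (a - b) = cstar a - cstar b"
  using cstar_add[of a "-b"] by (simp add: cstar_minus)

lemma cstar_real_one: "cstar (scaleC (complex_of_real r) 1) = scaleC (complex_of_real r) 1"
  by (simp add: cstar_scaleC cstar_one)

lemma norm_sC_one: "norm (scaleC c 1) = cmod c"
  by (simp add: norm_scaleC)

end


definition invertible :: "'a::cstar_algebra \<Rightarrow> bool" where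
  "invertible a \<longleftrightarrow> (\<exists>b. b * a = 1 \<and> a * b = 1)"

definition cinv :: "'a::cstar_algebra \<Rightarrow> 'a" where
  "cinv a = (SOME b. b * a = 1 \<and> a * b = 1)"

lemma spectrum_iff: "z \<in> spectrum a \<longleftrightarrow> \<not> invertible (a - scaleC z 1)"
  by (simp add: spectrum_def invertible_def)

lemma inv_unique: fixes a b c :: "'a::cstar_algebra"
  assumes "b * a = 1" "a * c = 1" shows "b = c"
proof -
  have "b = b * (a * c)" using assms by simp
  also have "\<dots> = (b * a) * c" by (simp add: mult.assoc)
  finally show ?thesis using assms by simp
qed

lemma cinv_props: fixes a :: "'a::cstar_algebra"
  assumes "invertible a" shows "cinv a * a = 1" "a * cinv a = 1"
  using someI_ex[OF assms[unfolded invertible_def]] by (auto simp: cinv_def)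

lemma cinv_eq: fixes a b :: "'a::cstar_algebra"
  assumes "b * a = 1" "a * b = 1" shows "cinv a = b"
proof -
  have i: "invertible a" using assms invertible_def by blast
  show ?thesis using inv_unique[OF cinv_props(1)[OF i] assms(2)] .
qed

lemma invertible_one: "invertible (1::'a::cstar_algebra)"
  by (auto simp: invertible_def)

lemma invertible_minus: fixes a :: "'a::cstar_algebra"
  assumes "invertible a" shows "invertible (- a)"
proof -
  obtain b where "b * a = 1" "a * b = 1" using assms invertible_def by blast
  then have "(-b) * (-a) = 1" "(-a) * (-b) = 1" by simp_all
  then show ?thesis unfolding invertible_def by blast
qed

lemma invertible_minus_iff: fixes a :: "'a::cstar_algebra"
  shows "invertible (- a) \<longleftrightarrow> invertible a"
  using invertible_minus[of a] invertible_minus[of "-a"] by auto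

lemma invertible_sC: fixes a :: "'a::cstar_algebra"
  assumes "c \<noteq> 0" "invertible a" shows "invertible (scaleC c a)"
proof -
  obtain b where b: "b * a = 1" "a * b = 1" using assms(2) invertible_def by blast
  have "scaleC (1/c) b * scaleC c a = 1" "scaleC c a * scaleC (1/c) b = 1"
    using assms(1) b by (simp_all add: mult_scaleC_left mult_scaleC_right scaleC_scaleC scaleC_one)
  then show ?thesis unfolding invertible_def by blast
qed

lemma geo_tele: fixes x :: "'a::ring_1"
  shows "(1 - x) * (\<Sum>i<n. x ^ i) = 1 - x ^ n" "(\<Sum>i<n. x ^ i) * (1 - x) = 1 - x ^ n"
proof -
  show "(1 - x) * (\<Sum>i<n. x ^ i) = 1 - x ^ n"
  proof (induct n)
    case (Suc n)
    have "(1 - x) * (\<Sum>i<Suc n. x ^ i) = (1 - x) * (\<Sum>i<n. x ^ i) + (1 - x) * x ^ n"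
      by (simp add: distrib_left)
    also have "\<dots> = 1 - x ^ Suc n" using Suc by (simp add: algebra_simps)
    finally show ?case .
  qed simp
  show "(\<Sum>i<n. x ^ i) * (1 - x) = 1 - x ^ n"
  proof (induct n)
    case (Suc n)
    have "(\<Sum>i<Suc n. x ^ i) * (1 - x) = (\<Sum>i<n. x ^ i) * (1 - x) + x ^ n * (1 - x)"
      by (simp add: distrib_right)
    also have "\<dots> = 1 - x ^ Suc n" using Suc by (simp add: algebra_simps power_commutes)
    finally show ?case .
  qed simp
qed

lemma neumann: fixes e :: "'a::cstar_algebra"
  assumes "norm e < 1" shows "invertible (1 - e)"
proof -
  have sn: "summable (\<lambda>n. norm (e ^ n))"
    by (rule summable_comparison_test'[OF summable_geometric[of "norm e"], of 0])
       (use assms norm_power_ineq in auto)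
  have s: "summable (\<lambda>n. e ^ n)" by (rule summable_norm_cancel[OF sn])
  define S where "S = suminf (\<lambda>n. e ^ n)"
  have lim: "(\<lambda>n. \<Sum>i<n. e ^ i) \<longlonglongrightarrow> S" unfolding S_def by (rule summable_LIMSEQ[OF s])
  have p0: "(\<lambda>n. e ^ n) \<longlonglongrightarrow> 0"
    by (rule Lim_null_comparison[where g="\<lambda>n. norm e ^ n"])
       (use assms norm_power_ineq in \<open>auto intro!: LIMSEQ_power_zero always_eventually\<close>)
  have l1: "(\<lambda>n. (1 - e) * (\<Sum>i<n. e ^ i)) \<longlonglongrightarrow> (1 - e) * S"
    by (intro tendsto_intros lim)
  have l1': "(\<lambda>n. (1 - e) * (\<Sum>i<n. e ^ i)) \<longlonglongrightarrow> 1"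
    unfolding geo_tele using tendsto_diff[OF tendsto_const[of 1] p0] by simp
  have l2: "(\<lambda>n. (\<Sum>i<n. e ^ i) * (1 - e)) \<longlonglongrightarrow> S * (1 - e)"
    by (intro tendsto_intros lim)
  have l2': "(\<lambda>n. (\<Sum>i<n. e ^ i) * (1 - e)) \<longlonglongrightarrow> 1"
    unfolding geo_tele using tendsto_diff[OF tendsto_const[of 1] p0] by simp
  have "(1 - e) * S = 1" using LIMSEQ_unique[OF l1 l1'] .
  moreover have "S * (1 - e) = 1" using LIMSEQ_unique[OF l2 l2'] .
  ultimately show ?thesis unfolding invertible_def by blast
qed

lemma neumannC: fixes u :: "'a::cstar_algebra"
  assumes "norm u < cmod z" shows "invertible (scaleC z 1 - u)"
proof -
  have z: "z \<noteq> 0" using assms norm_ge_zero[of u] by auto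
  have "norm (scaleC (1/z) u) < 1"
    using assms z by (simp add: norm_scaleC norm_divide divide_simps)
  then have "invertible (1 - scaleC (1/z) u)" by (rule neumann)
  then have "invertible (scaleC z (1 - scaleC (1/z) u))" by (rule invertible_sC[OF z])
  moreover have "scaleC z (1 - scaleC (1/z) u) = scaleC z 1 - u"
    using z by (simp add: sC_diff_right scaleC_scaleC scaleC_one)
  ultimately show ?thesis by simp
qed

lemma spectrum_bound: fixes a :: "'a::cstar_algebra"
  assumes "z \<in> spectrum a" shows "cmod z \<le> norm a"
proof (rule ccontr)
  assume "\<not> cmod z \<le> norm a"
  then have "invertible (scaleC z 1 - a)" by (intro neumannC) simp
  then have "invertible (- (scaleC z 1 - a))" by (rule invertible_minus)
  then show False using assms by (simp add: spectrum_iff)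
qed

lemma inv_perturb: fixes a b e :: "'a::cstar_algebra"
  assumes ba: "b * a = 1" and ab: "a * b = 1" and small: "norm b * norm e < 1"
  shows "invertible (a - e)" "norm (cinv (a - e) - b) \<le> norm b ^ 2 * norm e / (1 - norm b * norm e)"
proof -
  have be: "norm (b * e) < 1" using norm_mult_ineq[of b e] small by linarith
  then have ic: "invertible (1 - b * e)" by (rule neumann)
  define c where "c = cinv (1 - b * e)"
  have c1: "c * (1 - b * e) = 1" and c2: "(1 - b * e) * c = 1"
    using cinv_props[OF ic] c_def by auto
  have fac: "a - e = a * (1 - b * e)"
    by (simp add: algebra_simps mult.assoc[symmetric] ab)
  have i1: "(c * b) * (a - e) = 1"
    unfolding fac by (simp add: mult.assoc[symmetric]) (simp add: mult.assoc ba c1)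
  have "(1 - b * e) * (c * b) = b" by (simp add: mult.assoc[symmetric] c2)
  then have i2: "(a - e) * (c * b) = 1"
    unfolding fac by (simp add: mult.assoc ab)
  show "invertible (a - e)" using i1 i2 invertible_def by blast
  have ce: "cinv (a - e) = c * b" using cinv_eq[OF i1 i2] .
  have cc: "c = 1 + c * (b * e)" using c1 by (simp add: algebra_simps)
  define t where "t = norm b * norm e"
  have t0: "0 \<le> t" "t < 1" using small by (auto simp: t_def)
  have "norm c \<le> 1 + norm c * norm (b * e)"
    using norm_triangle_ineq[of 1 "c * (b * e)"] norm_mult_ineq[of c "b * e"] cc by simp
  also have "\<dots> \<le> 1 + norm c * t"
    unfolding t_def by (intro add_left_mono mult_left_mono norm_mult_ineq) simp
  finally have "norm c * (1 - t) \<le> 1" by (simp add: algebra_simps)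
  then have nc: "norm c \<le> 1 / (1 - t)" using t0 by (simp add: divide_simps)
  have cm1: "c - 1 = c * (b * e)" using arg_cong[OF cc, of "\<lambda>t. t - 1"] by simp
  have "c * b - b = (c - 1) * b" by (simp add: algebra_simps)
  also have "\<dots> = c * b * e * b" unfolding cm1 by (simp add: mult.assoc)
  finally have cbe: "c * b - b = c * b * e * b" .
  have "norm (c * b * e * b) \<le> norm (c * b * e) * norm b" by (rule norm_mult_ineq)
  also have "\<dots> \<le> norm (c * b) * norm e * norm b"
    by (intro mult_right_mono norm_mult_ineq) simp
  also have "\<dots> \<le> norm c * norm b * norm e * norm b"
    by (intro mult_right_mono norm_mult_ineq) simp_all
  finally have "norm (c * b - b) \<le> norm c * norm b * norm e * norm b" unfolding cbe .
  also have "\<dots> = norm c * (norm b ^ 2 * norm e)" by (simp add: power2_eq_square)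
  also have "\<dots> \<le> 1 / (1 - t) * (norm b ^ 2 * norm e)"
    by (intro mult_right_mono nc) simp
  finally show "norm (cinv (a - e) - b) \<le> norm b ^ 2 * norm e / (1 - norm b * norm e)"
    unfolding ce t_def by simp
qed



lemma cinv_cont: fixes x :: "'a::cstar_algebra"
  assumes H: "\<forall>\<mu>\<in>S. invertible (1 - scaleC \<mu> x)"
  shows "continuous_on S (\<lambda>\<mu>. cinv (1 - scaleC \<mu> x))"
  unfolding continuous_on_def
proof
  fix \<mu>0 assume m0: "\<mu>0 \<in> S"
  define a where "a = 1 - scaleC \<mu>0 x"
  define b where "b = cinv a"
  have ba: "b * a = 1" and ab: "a * b = 1"
    using cinv_props[of a] H m0 by (auto simp: a_def b_def)
  define E where "E = (\<lambda>\<mu>. scaleC (\<mu> - \<mu>0) x)"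
  have eq: "\<And>\<mu>. 1 - scaleC \<mu> x = a - E \<mu>"
    by (simp add: a_def E_def sC_diff_left)
  have nE: "\<And>\<mu>. norm (E \<mu>) = cmod (\<mu> - \<mu>0) * norm x"
    by (simp add: E_def norm_scaleC)
  have t0: "((\<lambda>\<mu>. cmod (\<mu> - \<mu>0)) \<longlongrightarrow> 0) (at \<mu>0 within S)"
    using tendsto_norm_zero[OF LIM_zero[OF tendsto_ident_at[of \<mu>0 S]]] by simp
  have tE: "((\<lambda>\<mu>. norm (E \<mu>)) \<longlongrightarrow> 0) (at \<mu>0 within S)"
    unfolding nE using tendsto_mult_right_zero[OF t0, of "norm x"] by (simp add: mult.commute)
  have tbE: "((\<lambda>\<mu>. norm b * norm (E \<mu>)) \<longlongrightarrow> 0) (at \<mu>0 within S)"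
    using tendsto_mult_right_zero[OF tE, of "norm b"] by simp
  have ev: "eventually (\<lambda>\<mu>. norm b * norm (E \<mu>) < 1) (at \<mu>0 within S)"
    using order_tendstoD(2)[OF tbE, of 1] by simp
  have tg: "((\<lambda>\<mu>. norm b ^ 2 * norm (E \<mu>) / (1 - norm b * norm (E \<mu>))) \<longlongrightarrow> 0) (at \<mu>0 within S)"
    using tendsto_divide[OF tendsto_mult_right_zero[OF tE, of "norm b ^ 2"] tendsto_diff[OF tendsto_const[of 1] tbE]]
    by simp
  have "((\<lambda>\<mu>. cinv (1 - scaleC \<mu> x) - b) \<longlongrightarrow> 0) (at \<mu>0 within S)"
  proof (rule Lim_null_comparison[OF _ tg])
    show "\<forall>\<^sub>F \<mu> in at \<mu>0 within S. norm (cinv (1 - scaleC \<mu> x) - b) \<le> norm b ^ 2 * norm (E \<mu>) / (1 - norm b * norm (E \<mu>))"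
      using ev by eventually_elim (simp add: eq inv_perturb(2)[OF ba ab])
  qed
  then have "((\<lambda>\<mu>. cinv (1 - scaleC \<mu> x)) \<longlongrightarrow> b) (at \<mu>0 within S)"
    by (rule LIM_zero_cancel)
  then show "((\<lambda>\<mu>. cinv (1 - scaleC \<mu> x)) \<longlongrightarrow> cinv (1 - scaleC \<mu>0 x)) (at \<mu>0 within S)"
    by (simp add: b_def a_def)
qed

definition rt :: "nat \<Rightarrow> nat \<Rightarrow> complex" where
  "rt n m = exp (2 * of_real pi * \<i> * of_nat m / of_nat n)"

lemma rt_pow: "rt n m ^ p = rt n (m * p)"
proof -
  have "rt n m ^ p = exp (of_nat p * (2 * of_real pi * \<i> * of_nat m / of_nat n))"
    unfolding rt_def by (rule exp_of_nat_mult[symmetric])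
  also have "\<dots> = rt n (m * p)" unfolding rt_def by (simp add: algebra_simps)
  finally show ?thesis .
qed

lemma rt_norm: "cmod (rt n m) = 1"
  unfolding rt_def by simp

lemma rt_pow_n: "n \<noteq> 0 \<Longrightarrow> rt n m ^ n = 1"
  unfolding rt_def by (rule complex_root_unity)

lemma rt_sum: assumes "n \<ge> 1" "j < n"
  shows "(\<Sum>k<n. rt n k ^ j) = (if j = 0 then of_nat n else 0)"
proof (cases "j = 0")
  case True then show ?thesis by simp
next
  case False
  have eq: "\<And>k. rt n k ^ j = rt n j ^ k" by (simp add: rt_pow mult.commute)
  have ne: "rt n j \<noteq> 1"
    using complex_root_unity_eq_1[of n j] assms False unfolding rt_def
    by (auto dest: dvd_imp_le)
  have "(\<Sum>k<n. rt n j ^ k) = (rt n j ^ n - 1) / (rt n j - 1)" by (rule geometric_sum[OF ne])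
  also have "\<dots> = 0" using rt_pow_n[of n j] assms by simp
  finally show ?thesis using False eq by simp
qed

lemma avg_identity: fixes y :: "'a::cstar_algebra"
  assumes n: "n \<ge> 1" and H: "\<forall>k<n. invertible (1 - scaleC (rt n k) y)"
  shows "scaleC (1 / of_nat n) (\<Sum>k<n. cinv (1 - scaleC (rt n k) y)) * (1 - y ^ n) = 1"
    "(1 - y ^ n) * scaleC (1 / of_nat n) (\<Sum>k<n. cinv (1 - scaleC (rt n k) y)) = 1"
proof -
  define S where "S = (\<lambda>k. \<Sum>j<n. (scaleC (rt n k) y) ^ j)"
  have zn: "\<And>k. (scaleC (rt n k) y) ^ n = y ^ n"
    using n by (simp add: sC_power rt_pow_n scaleC_one)
  have L: "cinv (1 - scaleC (rt n k) y) * (1 - y ^ n) = S k" if "k < n" for k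
  proof -
    have "1 - y ^ n = (1 - scaleC (rt n k) y) * S k" unfolding S_def geo_tele zn ..
    then have "cinv (1 - scaleC (rt n k) y) * (1 - y ^ n) = (cinv (1 - scaleC (rt n k) y) * (1 - scaleC (rt n k) y)) * S k"
      by (simp add: mult.assoc)
    then show ?thesis using cinv_props(1)[of "1 - scaleC (rt n k) y"] H that by simp
  qed
  have R: "(1 - y ^ n) * cinv (1 - scaleC (rt n k) y) = S k" if "k < n" for k
  proof -
    have "1 - y ^ n = S k * (1 - scaleC (rt n k) y)" unfolding S_def geo_tele zn ..
    then have "(1 - y ^ n) * cinv (1 - scaleC (rt n k) y) = S k * ((1 - scaleC (rt n k) y) * cinv (1 - scaleC (rt n k) y))"
      by (simp add: mult.assoc)
    then show ?thesis using cinv_props(2)[of "1 - scaleC (rt n k) y"] H that by simp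
  qed
  have sumS: "(\<Sum>k<n. S k) = scaleC (of_nat n) 1"
  proof -
    have "(\<Sum>k<n. S k) = (\<Sum>k<n. \<Sum>j<n. scaleC (rt n k ^ j) (y ^ j))"
      unfolding S_def by (simp add: sC_power)
    also have "\<dots> = (\<Sum>j<n. \<Sum>k<n. scaleC (rt n k ^ j) (y ^ j))" by (rule sum.swap)
    also have "\<dots> = (\<Sum>j<n. scaleC (\<Sum>k<n. rt n k ^ j) (y ^ j))" by (simp add: sC_sum_left)
    also have "\<dots> = (\<Sum>j<n. if j = 0 then scaleC (of_nat n) 1 else 0)"
      by (rule sum.cong) (use n rt_sum in auto)
    also have "\<dots> = scaleC (of_nat n) 1" using n by (simp add: sum.delta)
    finally show ?thesis .
  qed
  have fin: "scaleC (1 / of_nat n) (scaleC (of_nat n) 1) = (1::'a)"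
    using n by (simp add: scaleC_scaleC scaleC_one)
  show "scaleC (1 / of_nat n) (\<Sum>k<n. cinv (1 - scaleC (rt n k) y)) * (1 - y ^ n) = 1"
    by (simp add: mult_scaleC_left sum_distrib_right L sumS fin)
  show "(1 - y ^ n) * scaleC (1 / of_nat n) (\<Sum>k<n. cinv (1 - scaleC (rt n k) y)) = 1"
    by (simp add: mult_scaleC_right sum_distrib_left R sumS fin)
qed

lemma pow0: fixes y :: "'a::cstar_algebra"
  assumes N: "N \<ge> 1" and s: "norm (y ^ N) < 1"
  shows "(\<lambda>n. y ^ n) \<longlonglongrightarrow> 0"
proof -
  define t where "t = norm (y ^ N)"
  define B where "B = max 1 (norm y) ^ N"
  have B0: "B \<ge> 0" by (simp add: B_def)
  have bound: "norm (y ^ n) \<le> B * t ^ (n div N)" for n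
  proof -
    have e: "y ^ n = y ^ (N * (n div N) + n mod N)" by simp
    have "y ^ n = (y ^ N) ^ (n div N) * y ^ (n mod N)"
      unfolding e by (simp only: power_add power_mult)
    then have "norm (y ^ n) \<le> norm ((y ^ N) ^ (n div N)) * norm (y ^ (n mod N))"
      by (simp add: norm_mult_ineq)
    also have "\<dots> \<le> t ^ (n div N) * norm y ^ (n mod N)"
      unfolding t_def by (intro mult_mono norm_power_ineq) auto
    finally have n1: "norm (y ^ n) \<le> t ^ (n div N) * norm y ^ (n mod N)" .
    have "norm y ^ (n mod N) \<le> max 1 (norm y) ^ (n mod N)" by (intro power_mono) auto
    also have "\<dots> \<le> B" unfolding B_def using N by (intro power_increasing) (auto simp: less_imp_le)
    finally have n2: "norm y ^ (n mod N) \<le> B" .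
    have "t ^ (n div N) * norm y ^ (n mod N) \<le> t ^ (n div N) * B"
      using n2 by (intro mult_left_mono) (auto simp: t_def)
    with n1 show ?thesis by (simp add: mult.commute)
  qed
  have tp: "(\<lambda>k. t ^ k) \<longlonglongrightarrow> 0" using s by (intro LIMSEQ_power_zero) (simp add: t_def)
  show ?thesis
  proof (rule LIMSEQ_I)
    fix r :: real assume r: "r > 0"
    have "r / (B + 1) > 0" using r B0 by simp
    from LIMSEQ_D[OF tp this] obtain K where K: "\<forall>k\<ge>K. norm (t ^ k - 0) < r / (B + 1)" by blast
    show "\<exists>no. \<forall>n\<ge>no. norm (y ^ n - 0) < r"
    proof (intro exI allI impI)
      fix n assume "K * N \<le> n"
      then have "K \<le> n div N" using div_le_mono[of "K * N" n N] N by simp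
      then have tk: "t ^ (n div N) < r / (B + 1)" using K by (simp add: t_def)
      have "norm (y ^ n) \<le> B * t ^ (n div N)" by (rule bound)
      also have "\<dots> \<le> (B + 1) * t ^ (n div N)" by (intro mult_right_mono) (auto simp: t_def)
      also have "\<dots> < (B + 1) * (r / (B + 1))" using tk B0 by (intro mult_strict_left_mono) auto
      also have "\<dots> = r" using B0 by simp
      finally show "norm (y ^ n - 0) < r" by simp
    qed
  qed
qed



lemma decay: fixes x :: "'a::cstar_algebra"
  assumes H: "\<forall>\<mu>. cmod \<mu> \<le> 1 \<longrightarrow> invertible (1 - scaleC \<mu> x)"
  shows "(\<lambda>n. x ^ n) \<longlonglongrightarrow> 0"
proof -
  define f where "f = (\<lambda>\<mu>. cinv (1 - scaleC \<mu> x))"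
  define D where "D = cball (0::complex) 1"
  have cont: "continuous_on D f" unfolding f_def
    by (rule cinv_cont) (use H in \<open>auto simp: D_def\<close>)
  have "uniformly_continuous_on D f"
    by (rule compact_uniformly_continuous[OF cont]) (simp add: D_def)
  then have uc: "\<forall>e>0. \<exists>d>0. \<forall>x\<in>D. \<forall>x'\<in>D. dist x' x < d \<longrightarrow> dist (f x') (f x) < e"
    unfolding uniformly_continuous_on_def .
  have "(1/8::real) > 0" by simp
  from uc[rule_format, OF this] obtain \<delta> where d0: "\<delta> > 0"
    and dU0: "\<forall>x\<in>D. \<forall>x'\<in>D. dist x' x < \<delta> \<longrightarrow> dist (f x') (f x) < 1/8" by blast
  have dU: "\<And>\<mu> \<mu>'. \<mu> \<in> D \<Longrightarrow> \<mu>' \<in> D \<Longrightarrow> dist \<mu>' \<mu> < \<delta> \<Longrightarrow> dist (f \<mu>') (f \<mu>) < 1/8"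
    using dU0 by blast
  define P where "P = (\<lambda>r::real. \<exists>N\<ge>1. norm ((scaleC (complex_of_real r) x) ^ N) < 1)"
  have step: "P r'" if r: "0 \<le> r" "r \<le> 1" and r': "0 \<le> r'" "r' \<le> 1" and rr: "\<bar>r - r'\<bar> < \<delta>" and Pr: "P r" for r r'
  proof -
    define y where "y = scaleC (complex_of_real r) x"
    define y' where "y' = scaleC (complex_of_real r') x"
    obtain N where N: "N \<ge> 1" "norm (y ^ N) < 1" using Pr by (auto simp: P_def y_def)
    have "(\<lambda>n. y ^ n) \<longlonglongrightarrow> 0" by (rule pow0[OF N])
    then have "(\<lambda>n. norm (y ^ n)) \<longlonglongrightarrow> 0" by (rule tendsto_norm_zero)
    from order_tendstoD(2)[OF this, of "1/9"] obtain M where M: "\<forall>n\<ge>M. norm (y ^ n) < 1/9"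
      by (auto simp: eventually_sequentially)
    define n where "n = max M 1"
    have n1: "n \<ge> 1" and yn: "norm (y ^ n) < 1/9" using M by (auto simp: n_def)
    have mu: "scaleC (rt n k) (scaleC (complex_of_real s) x) = scaleC (rt n k * complex_of_real s) x" for k s
      by (simp add: scaleC_scaleC)
    have muD: "rt n k * complex_of_real s \<in> D" if "0 \<le> s" "s \<le> 1" for k s
      using that by (simp add: D_def norm_mult rt_norm)
    have Hk: "\<forall>k<n. invertible (1 - scaleC (rt n k) (scaleC (complex_of_real s) x))" if "0 \<le> s" "s \<le> 1" for s
      unfolding mu using H muD[OF that] by (auto simp: D_def)
    define F where "F = (\<lambda>s. scaleC (1 / of_nat n) (\<Sum>k<n. cinv (1 - scaleC (rt n k) (scaleC (complex_of_real s) x))))"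
    have w1: "F r * (1 - y ^ n) = 1" using avg_identity(1)[OF n1 Hk[OF r]] by (simp add: F_def y_def)
    have w2: "(1 - y' ^ n) * F r' = 1" using avg_identity(2)[OF n1 Hk[OF r']] by (simp add: F_def y'_def)
    define w where "w = F r"
    have wy: "w = 1 + w * y ^ n" using w1 by (simp add: w_def algebra_simps)
    have "norm w \<le> 1 + norm w * norm (y ^ n)"
      using norm_triangle_ineq[of 1 "w * y ^ n"] norm_mult_ineq[of w "y ^ n"] wy by simp
    also have "\<dots> \<le> 1 + norm w * (1/9)" using yn by (intro add_left_mono mult_left_mono) auto
    finally have nw: "norm w \<le> 9/8" by simp
    have "w - 1 = w * y ^ n" using arg_cong[OF wy, of "\<lambda>t. t - 1"] by simp
    then have "norm (w - 1) = norm (w * y ^ n)" by simp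
    also have "\<dots> \<le> norm w * norm (y ^ n)" by (rule norm_mult_ineq)
    also have "\<dots> \<le> 9/8 * (1/9)" using nw yn by (intro mult_mono) auto
    finally have w1': "norm (w - 1) \<le> 1/8" by simp
    have diff: "norm (F r - F r') \<le> 1/8"
    proof -
      have "F r - F r' = scaleC (1 / of_nat n) (\<Sum>k<n. f (rt n k * complex_of_real r) - f (rt n k * complex_of_real r'))"
        by (simp add: F_def f_def mu sC_diff_right sum_subtractf)
      then have "norm (F r - F r') = (1 / real n) * norm (\<Sum>k<n. f (rt n k * complex_of_real r) - f (rt n k * complex_of_real r'))"
        by (simp add: norm_scaleC norm_divide)
      also have "\<dots> \<le> (1 / real n) * (\<Sum>k<n. norm (f (rt n k * complex_of_real r) - f (rt n k * complex_of_real r')))"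
        by (intro mult_left_mono norm_sum) auto
      also have "\<dots> \<le> (1 / real n) * (\<Sum>k<n. 1/8)"
      proof (intro mult_left_mono sum_mono)
        fix k assume "k \<in> {..<n}"
        have e1: "rt n k * complex_of_real r - rt n k * complex_of_real r' = rt n k * complex_of_real (r - r')"
          by (simp add: algebra_simps)
        have "dist (rt n k * complex_of_real r) (rt n k * complex_of_real r') = \<bar>r - r'\<bar>"
          unfolding dist_norm e1 norm_mult rt_norm norm_of_real by simp
        then have "dist (f (rt n k * complex_of_real r)) (f (rt n k * complex_of_real r')) < 1/8"
          using dU[OF muD[OF r'] muD[OF r]] rr by simp
        then show "norm (f (rt n k * complex_of_real r) - f (rt n k * complex_of_real r')) \<le> 1/8"
          by (simp add: dist_norm)
      qed auto
      also have "\<dots> = 1/8" using n1 by simp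
      finally show ?thesis .
    qed
    define w' where "w' = F r'"
    have "norm (w' - 1) \<le> norm (w' - w) + norm (w - 1)" using norm_triangle_ineq[of "w' - w" "w - 1"] by simp
    also have "\<dots> \<le> 1/4" using diff w1' by (simp add: w_def w'_def norm_minus_commute)
    finally have nw': "norm (w' - 1) \<le> 1/4" .
    define v where "v = 1 - y' ^ n"
    have vw: "v * w' = 1" using w2 by (simp add: v_def w'_def)
    have v1: "v - 1 = v * (1 - w')" using vw by (simp add: algebra_simps)
    have "norm v \<le> 1 + norm (v - 1)" using norm_triangle_ineq[of 1 "v - 1"] by simp
    also have "\<dots> = 1 + norm (v * (1 - w'))" using v1 by simp
    also have "\<dots> \<le> 1 + norm v * norm (1 - w')" by (simp add: norm_mult_ineq)
    also have "\<dots> \<le> 1 + norm v * (1/4)" using nw' by (intro add_left_mono mult_left_mono) (auto simp: norm_minus_commute)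
    finally have nv: "norm v \<le> 4/3" by simp
    have vy: "v - 1 = - (y' ^ n)" by (simp add: v_def)
    have "norm (y' ^ n) = norm (v - 1)" unfolding vy by simp
    also have "\<dots> = norm (v * (1 - w'))" using v1 by simp
    also have "\<dots> \<le> norm v * norm (1 - w')" by (rule norm_mult_ineq)
    also have "\<dots> \<le> 4/3 * (1/4)" using nv nw' by (intro mult_mono) (auto simp: norm_minus_commute)
    finally have "norm (y' ^ n) < 1" by simp
    then show "P r'" unfolding P_def y'_def using n1 by blast
  qed
  have Pm: "P (min 1 (real m * \<delta> / 2))" for m
  proof (induct m)
    case 0
    show ?case unfolding P_def by (intro exI[of _ 1]) simp
  next
    case (Suc m)
    show ?case
    proof (rule step[OF _ _ _ _ _ Suc])
      show "\<bar>min 1 (real m * \<delta> / 2) - min 1 (real (Suc m) * \<delta> / 2)\<bar> < \<delta>"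
        using d0 by (auto simp: min_def algebra_simps)
    qed (use d0 in auto)
  qed
  obtain m where m: "2 / \<delta> < real m" using reals_Archimedean2 by blast
  then have "1 \<le> real m * \<delta> / 2" using d0 by (simp add: field_simps)
  then have "P 1" using Pm[of m] by (simp add: min_def split: if_splits)
  then obtain N where "N \<ge> 1" "norm (x ^ N) < 1" by (auto simp: P_def scaleC_one)
  then show ?thesis by (rule pow0)
qed

lemma selfadj_pow: fixes h :: "'a::cstar_algebra"
  assumes "cstar h = h"
  shows "cstar (h ^ (2 ^ k)) = h ^ (2 ^ k) \<and> norm (h ^ (2 ^ k)) = norm h ^ (2 ^ k)"
proof (induct k)
  case 0 show ?case using assms by simp
next
  case (Suc k)
  have eq: "h ^ (2 ^ Suc k) = h ^ (2 ^ k) * h ^ (2 ^ k)" by (simp add: power_add[symmetric] mult_2)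
  have "cstar (h ^ (2 ^ Suc k)) = h ^ (2 ^ Suc k)" unfolding eq using Suc by (simp add: cstar_mult)
  moreover have "norm (h ^ (2 ^ Suc k)) = norm (h ^ (2 ^ k)) * norm (h ^ (2 ^ k))"
    using cstar_identity[of "h ^ (2 ^ k)"] Suc unfolding eq by simp
  moreover have "norm (h ^ (2 ^ k)) * norm (h ^ (2 ^ k)) = norm h ^ (2 ^ Suc k)"
    using Suc by (simp add: power_add[symmetric] mult_2)
  ultimately show ?case by simp
qed

lemma spectral_radius: fixes h :: "'a::cstar_algebra"
  assumes sa: "cstar h = h" and m0: "0 \<le> m" and sp: "\<forall>z\<in>spectrum h. cmod z \<le> m"
  shows "norm h \<le> m"
proof (rule ccontr)
  assume "\<not> norm h \<le> m"
  define \<rho> where "\<rho> = (m + norm h) / 2"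
  have rm: "\<rho> > m" "\<rho> < norm h" using \<open>\<not> norm h \<le> m\<close> by (auto simp: \<rho>_def)
  have r0: "\<rho> > 0" using rm m0 by simp
  define x where "x = scaleC (complex_of_real (1 / \<rho>)) h"
  have H: "\<forall>\<mu>. cmod \<mu> \<le> 1 \<longrightarrow> invertible (1 - scaleC \<mu> x)"
  proof (intro allI impI)
    fix \<mu> :: complex assume mu: "cmod \<mu> \<le> 1"
    show "invertible (1 - scaleC \<mu> x)"
    proof (cases "\<mu> = 0")
      case True then show ?thesis by (simp add: invertible_one)
    next
      case False
      have "cmod (complex_of_real \<rho> / \<mu>) = \<rho> / cmod \<mu>" using r0 by (simp add: norm_divide)
      also have "\<dots> \<ge> \<rho>" using mu False r0 by (simp add: divide_simps)
      finally have "complex_of_real \<rho> / \<mu> \<notin> spectrum h" using sp rm by force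
      then have i1: "invertible (h - scaleC (complex_of_real \<rho> / \<mu>) 1)" by (simp add: spectrum_iff)
      have ne: "- (\<mu> / complex_of_real \<rho>) \<noteq> 0" using False r0 by simp
      have "scaleC (- (\<mu> / complex_of_real \<rho>)) (h - scaleC (complex_of_real \<rho> / \<mu>) 1) = 1 - scaleC \<mu> x"
        using False r0 by (simp add: x_def sC_diff_right scaleC_scaleC sC_minus_left scaleC_one)
      then show ?thesis using invertible_sC[OF ne i1] by simp
    qed
  qed
  have "(\<lambda>n. norm (x ^ n)) \<longlonglongrightarrow> 0" by (rule tendsto_norm_zero[OF decay[OF H]])
  from order_tendstoD(2)[OF this, of 1] obtain N where N: "\<forall>n\<ge>N. norm (x ^ n) < 1"
    by (auto simp: eventually_sequentially)
  have "N \<le> 2 ^ N" by (simp add: less_imp_le less_exp)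
  then have lt: "norm (x ^ (2 ^ N)) < 1" using N by blast
  have "norm (x ^ (2 ^ N)) = (1 / \<rho>) ^ (2 ^ N) * norm h ^ (2 ^ N)"
    using selfadj_pow[OF sa, of N] r0 by (simp add: x_def sC_power norm_scaleC norm_power norm_divide)
  also have "(1 / \<rho>) ^ (2 ^ N) * norm h ^ (2 ^ N) = norm h ^ (2 ^ N) / \<rho> ^ (2 ^ N)"
    by (simp add: power_one_over)
  finally have "norm h ^ (2 ^ N) / \<rho> ^ (2 ^ N) < 1" using lt by simp
  then have "norm h ^ (2 ^ N) < 1 * \<rho> ^ (2 ^ N)"
    by (rule iffD1[OF pos_divide_less_eq[OF zero_less_power[OF r0, of "2 ^ N"]]])
  then have "norm h ^ (2 ^ N) < \<rho> ^ (2 ^ N)" by (simp only: mult_1)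
  then have "norm h < \<rho>" by (rule power_less_imp_less_base) (rule less_imp_le[OF r0])
  then show False using rm by simp
qed

lemma norm_mono: fixes a b :: "'a::cstar_algebra"
  assumes pa: "positive a" and pc: "positive (b - a)"
  shows "norm a \<le> norm b"
proof (rule spectral_radius)
  show "cstar a = a" using pa by (simp add: positive_def)
  show "0 \<le> norm b" by simp
  define c where "c = b - a"
  have cc: "cstar c = c" using pc by (simp add: positive_def c_def)
  have spc: "spectrum c \<subseteq> {z. Im z = 0 \<and> 0 \<le> Re z}" using pc by (simp add: positive_def c_def)
  define S where "S = norm c"
  define v where "v = scaleC (complex_of_real S) 1 - c"
  have nv: "norm v \<le> S"
  proof (rule spectral_radius)
    show "cstar v = v" by (simp add: v_def cstar_diff cstar_real_one cc)
    show "0 \<le> S" by (simp add: S_def)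
    show "\<forall>z\<in>spectrum v. cmod z \<le> S"
    proof
      fix z assume z: "z \<in> spectrum v"
      have eqv: "v - scaleC z 1 = - (c - scaleC (complex_of_real S - z) 1)"
        by (simp add: v_def sC_diff_left algebra_simps)
      have "\<not> invertible (v - scaleC z 1)" using z by (simp add: spectrum_iff)
      then have "\<not> invertible (c - scaleC (complex_of_real S - z) 1)"
        unfolding eqv invertible_minus_iff .
      then have "complex_of_real S - z \<in> spectrum c" by (simp add: spectrum_iff)
      moreover from this have "cmod (complex_of_real S - z) \<le> S" unfolding S_def by (rule spectrum_bound)
      ultimately have i: "Im (complex_of_real S - z) = 0" "0 \<le> Re (complex_of_real S - z)" "cmod (complex_of_real S - z) \<le> S"
        using spc by auto
      have zz: "z = complex_of_real (Re z)" using i(1) by (simp add: complex_eq_iff)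
      have cz: "cmod z = \<bar>Re z\<bar>" by (subst zz) (rule norm_of_real)
      have "Re (complex_of_real S - z) \<le> cmod (complex_of_real S - z)" by (rule complex_Re_le_cmod)
      then show "cmod z \<le> S" using i(2) i(3) cz by simp
    qed
  qed
  show "\<forall>z\<in>spectrum a. cmod z \<le> norm b"
  proof (rule ccontr)
    assume "\<not> (\<forall>z\<in>spectrum a. cmod z \<le> norm b)"
    then obtain z where z: "z \<in> spectrum a" "cmod z > norm b" by auto
    have "Im z = 0" "0 \<le> Re z" using z(1) pa by (auto simp: positive_def)
    then have zr: "z = complex_of_real (Re z)" "cmod z = Re z" by (auto simp: complex_eq_iff cmod_eq_Re)
    have eq: "scaleC z 1 - a = scaleC (complex_of_real (Re z + S)) 1 - (b + v)"
      by (subst zr(1)) (simp add: v_def c_def scaleC_add_left algebra_simps)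
    have "norm (b + v) \<le> norm b + S" using norm_triangle_ineq[of b v] nv by simp
    also have "\<dots> < Re z + S" using z(2) zr(2) by simp
    also have "\<dots> = cmod (complex_of_real (Re z + S))"
      unfolding norm_of_real using \<open>0 \<le> Re z\<close> norm_ge_zero[of c] unfolding S_def by simp
    finally have "invertible (scaleC z 1 - a)" unfolding eq by (rule neumannC)
    then have "invertible (- (scaleC z 1 - a))" by (rule invertible_minus)
    then show False using z(1) by (simp add: spectrum_iff)
  qed
qed



lemma le_lim0: fixes g :: "nat \<Rightarrow> real"
  assumes "g \<longlonglongrightarrow> 0" "eventually (\<lambda>n. c \<le> g n) sequentially" shows "c \<le> 0"
  using tendsto_le[OF trivial_limit_sequentially assms(1) tendsto_const assms(2)] .

lemma funpow_fix: "T u = u \<Longrightarrow> (T ^^ n) u = u"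
  by (induct n) auto

context
  fixes d :: "'x \<Rightarrow> 'x \<Rightarrow> 'a::cstar_algebra"
  assumes dm: "cstar_metric d"
begin

lemma dpos: "positive (d x y)" using dm unfolding cstar_metric_def by blast
lemma dsym: "d x y = d y x" using dm unfolding cstar_metric_def by blast
lemma dzero: "d x y = 0 \<longleftrightarrow> x = y" using dm unfolding cstar_metric_def by blast
lemma dtri: "cleq (d x y) (d x z + d z y)" using dm unfolding cstar_metric_def by blast

lemma ntri: "norm (d x y) \<le> norm (d x z) + norm (d z y)"
  using norm_mono[OF dpos[of x y] dtri[of x y z, unfolded cleq_def]] norm_triangle_ineq[of "d x z" "d z y"] by linarith

lemma nsym: "norm (d x y) = norm (d y x)" by (simp add: dsym)

lemma nzero: "norm (d x y) \<le> 0 \<Longrightarrow> x = y"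
  using dzero by (simp add: norm_le_zero_iff)

lemma lim_unique:
  assumes "cconverges d s u" "cconverges d s v" shows "u = v"
proof -
  have l: "(\<lambda>n. norm (d (s n) u) + norm (d (s n) v)) \<longlonglongrightarrow> 0"
    using tendsto_add[OF assms[unfolded cconverges_def]] by simp
  have "\<forall>n. norm (d u v) \<le> norm (d (s n) u) + norm (d (s n) v)"
  proof
    fix n show "norm (d u v) \<le> norm (d (s n) u) + norm (d (s n) v)"
      using ntri[of u v "s n"] nsym[of u "s n"] by simp
  qed
  then have "norm (d u v) \<le> 0" by (intro le_lim0[OF l] always_eventually)
  then show ?thesis by (rule nzero)
qed

end

lemma contr_bound:
  fixes d :: "'x \<Rightarrow> 'x \<Rightarrow> 'a::cstar_algebra" and q \<delta> :: "'x \<Rightarrow> 'x \<Rightarrow> 'a"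
  assumes dm: "cstar_metric d"
    and c: "\<forall>x y n. n \<ge> 1 \<longrightarrow> cleq (d ((T ^^ n) x) ((T ^^ n) y)) (q x y ^ n * \<delta> x y)"
    and n: "n \<ge> 1"
  shows "norm (d ((T ^^ n) x) ((T ^^ n) y)) \<le> norm (q x y) ^ n * norm (\<delta> x y)"
proof -
  have "norm (d ((T ^^ n) x) ((T ^^ n) y)) \<le> norm (q x y ^ n * \<delta> x y)"
    using norm_mono[OF dpos[OF dm] c[rule_format, OF n, unfolded cleq_def]] .
  also have "\<dots> \<le> norm (q x y ^ n) * norm (\<delta> x y)" by (rule norm_mult_ineq)
  also have "\<dots> \<le> norm (q x y) ^ n * norm (\<delta> x y)" by (intro mult_right_mono norm_power_ineq) simp
  finally show ?thesis .
qed

theorem theorem3p7: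
  fixes d :: "'x \<Rightarrow> 'x \<Rightarrow> 'a::cstar_algebra" and T :: "'x \<Rightarrow> 'x"
  assumes "cstar_metric d"
    and "ccomplete d"
    and "ciric_type2 d T"
  shows "orbitally_continuous d T \<longleftrightarrow> (\<exists>!x. T x = x)"
proof -
  note dm = assms(1)
  obtain q \<delta> :: "'x \<Rightarrow> 'x \<Rightarrow> 'a" where
    q: "\<forall>x y. q x y \<in> central_positive \<and> norm (q x y) < 1" and
    c: "\<forall>x y n. n \<ge> 1 \<longrightarrow> cleq (d ((T ^^ n) x) ((T ^^ n) y)) (q x y ^ n * \<delta> x y)"
    using assms(3) unfolding ciric_type2_def by blast
  have cb: "\<And>x y n. n \<ge> 1 \<Longrightarrow> norm (d ((T ^^ n) x) ((T ^^ n) y)) \<le> norm (q x y) ^ n * norm (\<delta> x y)"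
    by (rule contr_bound[OF dm c])
  have q1: "\<And>x y. norm (q x y) < 1" using q by blast
  have tofix: "(\<lambda>n. norm (d ((T ^^ n) x) u)) \<longlonglongrightarrow> 0" if u: "T u = u" for x u
  proof (rule Lim_null_comparison)
    show "\<forall>\<^sub>F n in sequentially. norm (norm (d ((T ^^ n) x) u)) \<le> norm (q x u) ^ n * norm (\<delta> x u)"
      using eventually_ge_at_top[of 1]
    proof eventually_elim
      case (elim n)
      show ?case using cb[OF elim, of x u] funpow_fix[of T u n, OF u] by simp
    qed
    show "(\<lambda>n. norm (q x u) ^ n * norm (\<delta> x u)) \<longlonglongrightarrow> 0"
      using q1[of x u] by (intro tendsto_mult_left_zero LIMSEQ_power_zero) simp
  qed
  have uniq: "u = v" if "T u = u" "T v = v" for u v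
  proof -
    have "(\<lambda>n. norm (d ((T ^^ n) u) v)) \<longlonglongrightarrow> 0" by (rule tofix[OF that(2)])
    then have "(\<lambda>n. norm (d u v)) \<longlonglongrightarrow> 0" using funpow_fix[of T u, OF that(1)] by simp
    then have "norm (d u v) = 0" by (simp add: LIMSEQ_const_iff)
    then show ?thesis using nzero[OF dm] by simp
  qed
  have cauchy: "ccauchy d (\<lambda>n. (T ^^ n) x)" for x
  proof -
    define Q where "Q = norm (q x (T x))"
    define C where "C = norm (d x (T x)) + norm (\<delta> x (T x))"
    have Q: "0 \<le> Q" "Q < 1" using q1 by (auto simp: Q_def)
    have C0: "0 \<le> C" by (simp add: C_def)
    have stp: "norm (d ((T ^^ n) x) ((T ^^ Suc n) x)) \<le> C * Q ^ n" for n
    proof (cases "n = 0")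
      case True then show ?thesis by (simp add: C_def)
    next
      case False
      then have "norm (d ((T ^^ n) x) ((T ^^ n) (T x))) \<le> Q ^ n * norm (\<delta> x (T x))"
        using cb[of n x "T x"] by (simp add: Q_def)
      also have "\<dots> \<le> Q ^ n * C" using Q by (intro mult_left_mono) (auto simp: C_def)
      finally show ?thesis by (simp add: funpow_swap1 mult.commute)
    qed
    have geo: "(\<Sum>i<k. Q ^ i) \<le> 1 / (1 - Q)" for k
    proof -
      have "(\<Sum>i<k. Q ^ i) \<le> suminf (\<lambda>i. Q ^ i)"
        by (rule sum_le_suminf) (use Q in \<open>auto intro: summable_geometric\<close>)
      also have "\<dots> = 1 / (1 - Q)" using Q by (intro suminf_geometric) simp
      finally show ?thesis .
    qed
    have far: "norm (d ((T ^^ m) x) ((T ^^ (m + k)) x)) \<le> C * Q ^ m * (\<Sum>i<k. Q ^ i)" for m k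
    proof (induct k)
      case 0 show ?case using dzero[OF dm] by simp
    next
      case (Suc k)
      have "norm (d ((T ^^ m) x) ((T ^^ (m + Suc k)) x)) \<le>
          norm (d ((T ^^ m) x) ((T ^^ (m + k)) x)) + norm (d ((T ^^ (m + k)) x) ((T ^^ Suc (m + k)) x))"
        using ntri[OF dm] by simp
      also have "\<dots> \<le> C * Q ^ m * (\<Sum>i<k. Q ^ i) + C * Q ^ (m + k)" using Suc stp by (intro add_mono)
      also have "\<dots> = C * Q ^ m * (\<Sum>i<Suc k. Q ^ i)" by (simp add: algebra_simps power_add)
      finally show ?case .
    qed
    have far2: "norm (d ((T ^^ m) x) ((T ^^ (m + k)) x)) \<le> C * Q ^ m / (1 - Q)" for m k
    proof -
      have "C * Q ^ m * (\<Sum>i<k. Q ^ i) \<le> C * Q ^ m * (1 / (1 - Q))"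
        using geo C0 Q by (intro mult_left_mono) auto
      then show ?thesis using far[of m k] by simp
    qed
    have lim: "(\<lambda>N. C * Q ^ N / (1 - Q)) \<longlonglongrightarrow> 0"
      using Q by (intro tendsto_divide_zero tendsto_mult_right_zero LIMSEQ_power_zero) simp
    show ?thesis unfolding ccauchy_def
    proof (intro allI impI)
      fix e :: real assume e: "e > 0"
      from order_tendstoD(2)[OF lim e] obtain N where N: "\<forall>n\<ge>N. C * Q ^ n / (1 - Q) < e"
        by (auto simp: eventually_sequentially)
      have mono: "C * Q ^ m / (1 - Q) \<le> C * Q ^ N / (1 - Q)" if "m \<ge> N" for m
        using that Q C0 by (intro divide_right_mono mult_left_mono power_decreasing) auto
      show "\<exists>N. \<forall>m\<ge>N. \<forall>n\<ge>N. norm (d ((T ^^ n) x) ((T ^^ m) x)) < e"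
      proof (intro exI allI impI)
        fix m n assume mn: "m \<ge> N" "n \<ge> N"
        show "norm (d ((T ^^ n) x) ((T ^^ m) x)) < e"
        proof (cases "m \<le> n")
          case True
          then obtain k where "n = m + k" using le_Suc_ex by blast
          then have "norm (d ((T ^^ n) x) ((T ^^ m) x)) \<le> C * Q ^ m / (1 - Q)"
            using far2[of m k] nsym[OF dm, of "(T ^^ n) x" "(T ^^ m) x"] by simp
          also have "\<dots> < e" using N mn by auto
          finally show ?thesis .
        next
          case False
          then obtain k where "m = n + k" using le_Suc_ex[of n m] by auto
          then have "norm (d ((T ^^ n) x) ((T ^^ m) x)) \<le> C * Q ^ n / (1 - Q)"
            using far2[of n k] by simp
          also have "\<dots> < e" using N mn by auto
          finally show ?thesis .
        qed
      qed
    qed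
  qed
  show ?thesis
  proof
    assume oc: "orbitally_continuous d T"
    define x0 :: 'x where "x0 = undefined"
    obtain u where u: "cconverges d (\<lambda>n. (T ^^ n) x0) u"
      using assms(2) cauchy[of x0] unfolding ccomplete_def by blast
    have "orbitally_continuous_at d T u" using oc by (simp add: orbitally_continuous_def)
    then have oca: "\<forall>x (ni::nat \<Rightarrow> nat). strict_mono ni \<longrightarrow>
        (\<lambda>i. norm (d ((T ^^ ni i) x) u)) \<longlonglongrightarrow> 0 \<longrightarrow>
        (\<lambda>i. norm (d ((T ^^ (ni i + 1)) x) (T u))) \<longlonglongrightarrow> 0"
      unfolding orbitally_continuous_at_def .
    have u': "(\<lambda>i. norm (d ((T ^^ id i) x0) u)) \<longlonglongrightarrow> 0" using u unfolding cconverges_def by simp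
    have "(\<lambda>i. norm (d ((T ^^ (id i + 1)) x0) (T u))) \<longlonglongrightarrow> 0"
      using oca[rule_format, OF strict_mono_id u'] .
    then have c1: "cconverges d (\<lambda>i. (T ^^ Suc i) x0) (T u)" by (simp add: cconverges_def)
    have c2: "cconverges d (\<lambda>i. (T ^^ Suc i) x0) u"
      using LIMSEQ_Suc[OF u[unfolded cconverges_def]] by (simp add: cconverges_def)
    have fx: "T u = u" using lim_unique[OF dm c1 c2] .
    show "\<exists>!x. T x = x" using fx uniq by blast
  next
    assume "\<exists>!x. T x = x"
    then obtain u where u: "T u = u" by blast
    show "orbitally_continuous d T"
      unfolding orbitally_continuous_def orbitally_continuous_at_def
    proof (intro allI impI)
      fix w x and ni :: "nat \<Rightarrow> nat"
      assume sm: "strict_mono ni" and lw: "(\<lambda>i. norm (d ((T ^^ ni i) x) w)) \<longlonglongrightarrow> 0"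
      have lu: "(\<lambda>i. norm (d ((T ^^ ni i) x) u)) \<longlonglongrightarrow> 0"
        using LIMSEQ_subseq_LIMSEQ[OF tofix[OF u, of x] sm] by (simp add: o_def)
      have wu: "w = u" using lim_unique[OF dm, of "\<lambda>i. (T ^^ ni i) x" w u] lw lu
        by (simp add: cconverges_def)
      have sm2: "strict_mono (\<lambda>i. ni i + 1)" using sm by (simp add: strict_mono_def)
      show "(\<lambda>i. norm (d ((T ^^ (ni i + 1)) x) (T w))) \<longlonglongrightarrow> 0"
        using LIMSEQ_subseq_LIMSEQ[OF tofix[OF u, of x] sm2] wu u by (simp add: o_def)
    qed
  qed
qed


end
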